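(* Let $k\ge 0$ be an integer with $k\not\equiv 1 \pmod 3$ and let $m=4k+2$. Then there exists a cyclic DCA$(4,4m+1;4m)$, i.e. a cyclic DCA$(4,16k+9;16k+8)$, satisfying P1 and P2.
   Context: A difference covering array DCA$(k',\eta;n)$ over $\mathbb{Z}_n$ (a cyclic DCA) is an $\eta\times k'$ matrix $Q=[q(i,j)]$ with entries in $\mathbb{Z}_n$ such that for every pair of distinct columns $j,j'$ the multiset $\{q(i,j)-q(i,j') : 0\le i\le \eta-1\}$ contains every element of $\mathbb{Z}_n$ at least once. A DCA$(k',n+1;n)$ is taken in normalized form: all entries of its last row (row $n$) and last column (column $k'-1$) equal $0$. It satisfies P1 if $0$ occurs at least twice in every column, and P2 if for all distinct columns $j,j'$ with $j\neq k'-1\neq j'$, the set $\{q(i,j)-q(i,j') : 0\le i\le n-1\}$ equals $\mathbb{Z}_n\setminus\{0\}$. *)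

theory Defs
  imports Main
begin

(* An eta x k' matrix over Z_n is represented by Q :: nat => nat => int,
   Q i j = entry in row i (0 <= i < eta), column j (0 <= j < k'),
   with entries taken as representatives in {0..<n}; arithmetic is mod n. *)

definition entries_in_Zn :: "nat \<Rightarrow> nat \<Rightarrow> int \<Rightarrow> (nat \<Rightarrow> nat \<Rightarrow> int) \<Rightarrow> bool" where
  "entries_in_Zn k' eta n Q \<longleftrightarrow> (\<forall>i<eta. \<forall>j<k'. 0 \<le> Q i j \<and> Q i j < n)"

definition is_DCA :: "nat \<Rightarrow> nat \<Rightarrow> int \<Rightarrow> (nat \<Rightarrow> nat \<Rightarrow> int) \<Rightarrow> bool" where
  "is_DCA k' eta n Q \<longleftrightarrow> n \<ge> 1 \<and> entries_in_Zn k' eta n Q \<and>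
     (\<forall>j<k'. \<forall>j'<k'. j \<noteq> j' \<longrightarrow>
        (\<forall>d\<in>{0..<n}. \<exists>i<eta. (Q i j - Q i j') mod n = d))"

definition is_normalized_DCA :: "nat \<Rightarrow> nat \<Rightarrow> (nat \<Rightarrow> nat \<Rightarrow> int) \<Rightarrow> bool" where
  "is_normalized_DCA k' n Q \<longleftrightarrow> is_DCA k' (n+1) (int n) Q \<and>
     (\<forall>j<k'. Q n j = 0) \<and> (\<forall>i<n+1. Q i (k'-1) = 0)"

definition DCA_P1 :: "nat \<Rightarrow> nat \<Rightarrow> (nat \<Rightarrow> nat \<Rightarrow> int) \<Rightarrow> bool" where
  "DCA_P1 k' eta Q \<longleftrightarrow> (\<forall>j<k'. card {i. i < eta \<and> Q i j = 0} \<ge> 2)"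

definition DCA_P2 :: "nat \<Rightarrow> nat \<Rightarrow> (nat \<Rightarrow> nat \<Rightarrow> int) \<Rightarrow> bool" where
  "DCA_P2 k' n Q \<longleftrightarrow> (\<forall>j<k'. \<forall>j'<k'. j \<noteq> j' \<and> j \<noteq> k'-1 \<and> j' \<noteq> k'-1 \<longrightarrow>
      {(Q i j - Q i j') mod int n | i. i < n} = {1..<int n})"

end

theory Submission
  imports Defs "HOL-Number_Theory.Cong" "HOL-Computational_Algebra.Primes"
begin


definition zt :: "nat list list" where
  "zt = [[0,1,2,3,4,5,6,7],[6,5,3,2,0,7,1,4],[4,2,7,6,3,1,0,5]]"
definition pt :: "nat list list" where
  "pt = [[0,1,2,3,4,5,6,7],[2,0,6,7,5,3,1,4],[4,3,7,6,2,1,5,0]]"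
definition nt :: "nat list list" where
  "nt = [[0,1,2,3,4,5,6,7],[7,1,0,5,4,6,3,2],[2,1,7,6,4,3,5,0]]"
definition lt :: "int list list" where
  "lt = [[1,1,1,1,-1,-1,-2,2],[-1,-1,3,-3,1,3,3,-1],[4,-2,2,2,2,-4,2,2]]"

definition dd :: "nat list list \<Rightarrow> nat \<Rightarrow> nat \<Rightarrow> nat \<Rightarrow> int" where
  "dd tab j j' a = (int (tab!j!a) - int (tab!j'!a)) mod 8"
definition nu :: "nat list list \<Rightarrow> nat \<Rightarrow> nat \<Rightarrow> nat \<Rightarrow> int" where
  "nu tab j j' a = lt!j!(tab!j!a) - lt!j'!(tab!j'!a)"

lemma bq: "(\<forall>x\<in>set [0..<n]. P x) \<longleftrightarrow> (\<forall>x<n. P x)" "(\<exists>x\<in>set [0..<n]. P x) \<longleftrightarrow> (\<exists>x<n. P x)"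
  by auto

lemma tab_surj_c:
  "list_all (\<lambda>j. list_all (\<lambda>v. list_ex (\<lambda>a. zt!j!a = v) [0..<8] \<and> list_ex (\<lambda>a. pt!j!a = v) [0..<8] \<and> list_ex (\<lambda>a. nt!j!a = v) [0..<8]) [0..<8]) [0..<3]"
  unfolding zt_def pt_def nt_def by code_simp

lemma tab_surj: assumes "j < 3" "v < 8"
  shows "(\<exists>a<8. zt!j!a = v) \<and> (\<exists>a<8. pt!j!a = v) \<and> (\<exists>a<8. nt!j!a = v)"
  using tab_surj_c assms unfolding list_all_iff list_ex_iff bq by blast

lemma tab_lt_c:
  "list_all (\<lambda>j. list_all (\<lambda>a. zt!j!a < 8 \<and> pt!j!a < 8 \<and> nt!j!a < 8) [0..<8]) [0..<3]"
  unfolding zt_def pt_def nt_def by code_simp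

lemma tab_lt: assumes "j < 3" "a < 8" shows "zt!j!a < 8" "pt!j!a < 8" "nt!j!a < 8"
  using tab_lt_c assms unfolding list_all_iff list_ex_iff bq by blast+

lemma lam_c: "list_all (\<lambda>j. list_all (\<lambda>v. lt!j!v dvd 12) [0..<8]) [0..<3]"
  unfolding lt_def by code_simp

lemma lam_dvd: assumes "j < 3" "v < 8" shows "lt!j!v dvd 12"
  using lam_c assms unfolding list_all_iff list_ex_iff bq by blast

lemma znz_c: "list_all (\<lambda>j. list_all (\<lambda>j'. j = j' \<or> list_all (\<lambda>a. dd zt j j' a \<noteq> 0) [0..<8]) [0..<3]) [0..<3]"
  unfolding zt_def dd_def by code_simp

lemma znz: assumes "j < 3" "j' < 3" "j \<noteq> j'" "a < 8" shows "dd zt j j' a \<noteq> 0"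
  using znz_c assms unfolding list_all_iff list_ex_iff bq by blast

lemma zsurj_c: "list_all (\<lambda>j. list_all (\<lambda>j'. j = j' \<or> list_all (\<lambda>e. e = 0 \<or> list_ex (\<lambda>a. dd zt j j' a = int e) [0..<8]) [0..<8]) [0..<3]) [0..<3]"
  unfolding zt_def dd_def by code_simp

lemma zsurj: assumes "j < 3" "j' < 3" "j \<noteq> j'" "e < 8" "e \<noteq> 0" shows "\<exists>a<8. dd zt j j' a = int e"
  using zsurj_c assms unfolding list_all_iff list_ex_iff bq by blast

lemma nu_c: "list_all (\<lambda>j. list_all (\<lambda>j'. j = j' \<or> list_all (\<lambda>a. nu pt j j' a \<noteq> 0 \<and> nu pt j j' a dvd 72 \<and> nu nt j j' a \<noteq> 0 \<and> nu nt j j' a dvd 72) [0..<8]) [0..<3]) [0..<3]"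
  unfolding pt_def nt_def lt_def nu_def by code_simp

lemma nu_ok: assumes "j < 3" "j' < 3" "j \<noteq> j'" "a < 8"
  shows "nu pt j j' a \<noteq> 0" "nu pt j j' a dvd 72" "nu nt j j' a \<noteq> 0" "nu nt j j' a dvd 72"
  using nu_c assms unfolding list_all_iff list_ex_iff bq by blast+

definition mt :: "nat \<Rightarrow> nat \<Rightarrow> nat \<Rightarrow> nat \<Rightarrow> nat \<Rightarrow> bool" where
  "mt j j' e a b \<longleftrightarrow>
     (dd pt j j' a = int e \<and> dd nt j j' b = int e \<and> nu pt j j' a = nu nt j j' b) \<or>
     (dd pt j j' a = int e \<and> dd pt j j' b = int e \<and> nu pt j j' b = - nu pt j j' a) \<or>
     (dd nt j j' a = int e \<and> dd nt j j' b = int e \<and> nu nt j j' b = - nu nt j j' a)"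

lemma match_c: "list_all (\<lambda>j. list_all (\<lambda>j'. j = j' \<or> list_all (\<lambda>e. list_ex (\<lambda>a. list_ex (\<lambda>b. mt j j' e a b) [0..<8]) [0..<8]) [0..<8]) [0..<3]) [0..<3]"
  unfolding pt_def nt_def lt_def nu_def dd_def mt_def by code_simp

lemma match: assumes "j < 3" "j' < 3" "j \<noteq> j'" "e < 8" shows "\<exists>a<8. \<exists>b<8. mt j j' e a b"
  using match_c assms unfolding list_all_iff list_ex_iff bq by blast



definition TT :: "nat \<Rightarrow> int" where "TT k = 2 * int k + 1"

lemma TT_pos: "TT k > 0" unfolding TT_def by simp

lemma TT_sq: "\<exists>m. (TT k)^2 = 1 + 8*m"
proof -
  have "even (int k * (int k + 1))" by simp
  then obtain m where m: "int k * (int k + 1) = 2*m" by blast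
  have "(TT k)^2 = 1 + 4*(int k * (int k + 1))" unfolding TT_def by (simp add: power2_eq_square algebra_simps)
  also have "\<dots> = 1 + 8*m" using m by simp
  finally show ?thesis by blast
qed

lemma cop8: "coprime 8 (TT k)"
proof -
  have "odd (TT k)" unfolding TT_def by simp
  then have "coprime 2 (TT k)" by simp
  then have "coprime (2^3) (TT k)" by (simp only: coprime_power_left_iff) simp
  then show ?thesis by simp
qed


lemma a1: "(3::nat) dvd 2*k+1 \<Longrightarrow> k mod 3 = 1" by presburger
lemma cop72: assumes "k mod 3 \<noteq> 1" shows "coprime 72 (TT k)"
proof -
  have "odd (TT k)" unfolding TT_def by simp
  then have c2: "coprime 2 (TT k)" by simp
  have "\<not> 3 dvd TT k"
  proof
    assume "3 dvd TT k"
    then have "int 3 dvd int (2*k+1)" unfolding TT_def by (simp add: add.commute)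
    then have "3 dvd 2*k+1" by (simp only: int_dvd_int_iff)
    then show False using assms a1 by blast
  qed
  then have c3: "coprime 3 (TT k)" by (intro prime_imp_coprime_int) auto
  have "coprime (2^3) (TT k)" using c2 coprime_power_left_iff by blast
  moreover have "coprime (3^2) (TT k)" using c3 coprime_power_left_iff by blast
  ultimately have "coprime (2^3 * 3^2) (TT k)" using coprime_mult_left_iff by blast
  then show ?thesis by simp
qed

lemma cop_dvd72: assumes "k mod 3 \<noteq> 1" "c dvd 72" shows "coprime c (TT k)"
  by (rule coprime_divisors[OF assms(2) dvd_refl cop72[OF assms(1)]])

lemma solve: assumes "coprime c (TT k)" shows "\<exists>x. 0 \<le> x \<and> x < TT k \<and> (c*x) mod TT k = y mod TT k"
proof -
  obtain w where w: "[c * w = 1] (mod TT k)" using cong_solve_coprime_int[OF assms] by blast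
  define x where "x = (w*y) mod TT k"
  have "[c*x = c*(w*y)] (mod TT k)" unfolding x_def by (simp add: cong_def mod_mult_right_eq)
  moreover have "[c * w * y = 1 * y] (mod TT k)" by (rule cong_scalar_right[OF w])
  ultimately have "[c*x = y] (mod TT k)" by (simp add: cong_def mult.assoc)
  then have "(c*x) mod TT k = y mod TT k" by (simp add: cong_def)
  moreover have "0 \<le> x" "x < TT k" unfolding x_def using TT_pos[of k] by simp_all
  ultimately show ?thesis by blast
qed

lemma eq_by_mods:
  fixes p z :: int
  assumes "0 \<le> p" "p < 8*TT k" "0 \<le> z" "z < 8*TT k" "p mod 8 = z mod 8" "p mod TT k = z mod TT k"
  shows "p = z"
proof -
  have c1: "[p = z] (mod 8)" "[p = z] (mod TT k)" using assms(5,6) unfolding cong_def by auto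
  have "[p = z] (mod 8 * TT k)" by (rule coprime_cong_mult[OF c1 cop8])
  then have "p mod (8*TT k) = z mod (8*TT k)" unfolding cong_def .
  then show ?thesis using assms(1-4) by simp
qed

definition crt :: "nat \<Rightarrow> int \<Rightarrow> int \<Rightarrow> int" where
  "crt k u v = (u * (TT k)^2 + v * (1 - (TT k)^2)) mod (8 * TT k)"

lemma crt_props: "crt k u v mod 8 = u mod 8" "crt k u v mod TT k = v mod TT k"
  "0 \<le> crt k u v" "crt k u v < 8 * TT k"
proof -
  obtain m where m: "(TT k)^2 = 1 + 8*m" using TT_sq by blast
  have e1: "u * (TT k)^2 + v * (1 - (TT k)^2) = u + 8*(u*m - v*m)" unfolding m by (simp add: algebra_simps)
  have "crt k u v mod 8 = (u * (TT k)^2 + v * (1 - (TT k)^2)) mod 8"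
    unfolding crt_def by (rule mod_mod_cancel) simp
  also have "\<dots> = u mod 8" unfolding e1 by (rule mod_mult_self2)
  finally show "crt k u v mod 8 = u mod 8" .
  have e2: "u * (TT k)^2 + v * (1 - (TT k)^2) = v + TT k * (u * TT k - v * TT k)" by (simp add: algebra_simps power2_eq_square)
  have "crt k u v mod TT k = (u * (TT k)^2 + v * (1 - (TT k)^2)) mod TT k"
    unfolding crt_def by (rule mod_mod_cancel) simp
  also have "\<dots> = v mod TT k" unfolding e2 by (rule mod_mult_self2)
  finally show "crt k u v mod TT k = v mod TT k" .
  show "0 \<le> crt k u v" "crt k u v < 8 * TT k" unfolding crt_def using TT_pos[of k] by simp_all
qed


definition tb :: "nat \<Rightarrow> nat \<Rightarrow> nat list list" where
  "tb k x = (if x = 0 then zt else if x \<le> k then pt else nt)"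

definition QQ :: "nat \<Rightarrow> nat \<Rightarrow> nat \<Rightarrow> int" where
  "QQ k i j = (if i < 16*k+8 \<and> j < 3 then
     crt k (int (tb k (i div 8) ! j ! (i mod 8))) (lt ! j ! (tb k (i div 8) ! j ! (i mod 8)) * int (i div 8))
   else 0)"

lemma N_eq: "8 * TT k = int (16*k+8)" unfolding TT_def by simp

lemma row: fixes a x k :: nat assumes "a < 8" "x \<le> 2*k"
  shows "a + 8*x < 16*k+8" "(a + 8*x) div 8 = x" "(a + 8*x) mod 8 = a"
  using assms by auto

lemma QQ_facts: assumes "i < 16*k+8" "j < 3"
  shows "QQ k i j mod 8 = int (tb k (i div 8) ! j ! (i mod 8)) mod 8"
    "QQ k i j mod TT k = (lt ! j ! (tb k (i div 8) ! j ! (i mod 8)) * int (i div 8)) mod TT k"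
    "0 \<le> QQ k i j" "QQ k i j < 8 * TT k"
  using assms crt_props unfolding QQ_def by simp_all

lemma QQ_diff: assumes "i < 16*k+8" "j < 3" "j' < 3"
  shows "(QQ k i j - QQ k i j') mod 8 = dd (tb k (i div 8)) j j' (i mod 8)"
    "(QQ k i j - QQ k i j') mod TT k = (nu (tb k (i div 8)) j j' (i mod 8) * int (i div 8)) mod TT k"
proof -
  have "(QQ k i j - QQ k i j') mod 8 = (QQ k i j mod 8 - QQ k i j' mod 8) mod 8" by (simp add: mod_diff_eq)
  also have "\<dots> = dd (tb k (i div 8)) j j' (i mod 8)"
    unfolding QQ_facts(1)[OF assms(1,2)] QQ_facts(1)[OF assms(1,3)] dd_def by (simp add: mod_diff_eq)
  finally show "(QQ k i j - QQ k i j') mod 8 = dd (tb k (i div 8)) j j' (i mod 8)" .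
  have "(QQ k i j - QQ k i j') mod TT k = (QQ k i j mod TT k - QQ k i j' mod TT k) mod TT k" by (simp add: mod_diff_eq)
  also have "\<dots> = (nu (tb k (i div 8)) j j' (i mod 8) * int (i div 8)) mod TT k"
    unfolding QQ_facts(2)[OF assms(1,2)] QQ_facts(2)[OF assms(1,3)] nu_def by (simp add: mod_diff_eq left_diff_distrib)
  finally show "(QQ k i j - QQ k i j') mod TT k = (nu (tb k (i div 8)) j j' (i mod 8) * int (i div 8)) mod TT k" .
qed

lemma target: assumes "i < 16*k+8" "j < 3" "j' < 3" "0 \<le> d" "d < 8 * TT k"
  "dd (tb k (i div 8)) j j' (i mod 8) = d mod 8"
  "(nu (tb k (i div 8)) j j' (i mod 8) * int (i div 8)) mod TT k = d mod TT k"
  shows "(QQ k i j - QQ k i j') mod (8 * TT k) = d"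
proof (rule eq_by_mods)
  let ?p = "(QQ k i j - QQ k i j') mod (8 * TT k)"
  show "0 \<le> ?p" "?p < 8 * TT k" using TT_pos[of k] by simp_all
  show "0 \<le> d" "d < 8 * TT k" using assms by simp_all
  have "?p mod 8 = (QQ k i j - QQ k i j') mod 8" by (rule mod_mod_cancel) simp
  then show "?p mod 8 = d mod 8" using QQ_diff(1)[OF assms(1-3)] assms(6) by simp
  have "?p mod TT k = (QQ k i j - QQ k i j') mod TT k" by (rule mod_mod_cancel) simp
  then show "?p mod TT k = d mod TT k" using QQ_diff(2)[OF assms(1-3)] assms(7) by simp
qed

lemma cop_nz: assumes "coprime c (TT k)" "0 < x" "x < TT k" shows "(c*x) mod TT k \<noteq> 0"
proof
  assume "(c*x) mod TT k = 0"
  then have "TT k dvd c*x" by (simp add: dvd_eq_mod_eq_0)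
  moreover have "coprime (TT k) c" using assms(1) by (simp add: coprime_commute)
  ultimately have "TT k dvd x" using coprime_dvd_mult_right_iff by blast
  then have "TT k \<le> x" using assms(2) by (simp add: zdvd_imp_le)
  then show False using assms(3) by simp
qed



lemma tb_cases: "tb k 0 = zt" "0 < x \<Longrightarrow> x \<le> k \<Longrightarrow> tb k x = pt" "k < x \<Longrightarrow> tb k x = nt"
  unfolding tb_def by auto

lemma lam_cop: assumes "k mod 3 \<noteq> 1" "j < 3" "v < 8" shows "coprime (lt!j!v) (TT k)"
proof -
  have "(12::int) dvd 72" by simp
  then have "lt!j!v dvd 72" using lam_dvd[OF assms(2,3)] dvd_trans by blast
  then show ?thesis using cop_dvd72[OF assms(1)] by blast
qed

lemma col_surj: assumes "k mod 3 \<noteq> 1" "j < 3" "0 \<le> z" "z < 8 * TT k"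
  shows "\<exists>i<16*k+8. QQ k i j = z"
proof -
  define a' where "a' = nat (z mod 8)"
  have a'8: "a' < 8" and a'z: "int a' = z mod 8" unfolding a'_def by auto
  have key: "QQ k i j = z" if "i < 16*k+8" "tb k (i div 8) ! j ! (i mod 8) = a'"
      "(lt!j!a' * int (i div 8)) mod TT k = z mod TT k" for i
  proof (rule eq_by_mods)
    show "0 \<le> QQ k i j" "QQ k i j < 8 * TT k" using QQ_facts[OF that(1) assms(2)] by simp_all
    show "0 \<le> z" "z < 8 * TT k" using assms by simp_all
    show "QQ k i j mod 8 = z mod 8" using QQ_facts(1)[OF that(1) assms(2)] that(2) a'z by simp
    show "QQ k i j mod TT k = z mod TT k" using QQ_facts(2)[OF that(1) assms(2)] that(2,3) by simp
  qed
  show ?thesis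
  proof (cases "z mod TT k = 0")
    case True
    obtain a where a: "a < 8" "zt!j!a = a'" using tab_surj[OF assms(2) a'8] by blast
    have "a < 16*k+8" "a div 8 = 0" "a mod 8 = a" using a by auto
    then have "QQ k a j = z" using key[of a] a True tb_cases(1) by simp
    then show ?thesis using \<open>a < 16*k+8\<close> by blast
  next
    case False
    obtain x0 where x0: "0 \<le> x0" "x0 < TT k" "(lt!j!a' * x0) mod TT k = z mod TT k"
      using solve[OF lam_cop[OF assms(1,2) a'8]] by blast
    have "x0 \<noteq> 0" using x0(3) False by auto
    define x where "x = nat x0"
    have xx: "int x = x0" "0 < x" "x \<le> 2*k" using x0 \<open>x0 \<noteq> 0\<close> unfolding x_def TT_def by auto
    show ?thesis
    proof (cases "x \<le> k")
      case True
      obtain a where a: "a < 8" "pt!j!a = a'" using tab_surj[OF assms(2) a'8] by blast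
      note r = row[OF a(1) xx(3)]
      have "QQ k (a + 8*x) j = z" using key[OF r(1)] r a True xx x0 tb_cases(2)[OF xx(2) True] by simp
      then show ?thesis using r(1) by blast
    next
      case False
      then have "k < x" by simp
      obtain a where a: "a < 8" "nt!j!a = a'" using tab_surj[OF assms(2) a'8] by blast
      note r = row[OF a(1) xx(3)]
      have "QQ k (a + 8*x) j = z" using key[OF r(1)] r a xx x0 tb_cases(3)[OF \<open>k < x\<close>] by simp
      then show ?thesis using r(1) by blast
    qed
  qed
qed



lemma nu_cop: assumes "k mod 3 \<noteq> 1" "j < 3" "j' < 3" "j \<noteq> j'" "a < 8"
  shows "coprime (nu pt j j' a) (TT k)" "coprime (nu nt j j' a) (TT k)"
  by (rule cop_dvd72[OF assms(1) nu_ok(2)[OF assms(2-5)]], rule cop_dvd72[OF assms(1) nu_ok(4)[OF assms(2-5)]])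

lemma div8_le: "i < 16*k+8 \<Longrightarrow> i div 8 \<le> 2*k" for i k :: nat by auto


lemma QQ_nz: assumes "k mod 3 \<noteq> 1" "i < 16*k+8" "j < 3" "j' < 3" "j \<noteq> j'"
  shows "(QQ k i j - QQ k i j') mod (8 * TT k) \<noteq> 0"
proof
  assume H: "(QQ k i j - QQ k i j') mod (8 * TT k) = 0"
  then have "8 * TT k dvd (QQ k i j - QQ k i j')" by (simp only: dvd_eq_mod_eq_0)
  then have d8: "8 dvd (QQ k i j - QQ k i j')" and dT: "TT k dvd (QQ k i j - QQ k i j')"
    by (rule dvd_mult_left, rule dvd_mult_right)
  have a8: "i mod 8 < 8" by simp
  show False
  proof (cases "i div 8 = 0")
    case True
    have "(QQ k i j - QQ k i j') mod 8 = 0" using d8 by (simp only: dvd_eq_mod_eq_0)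
    then have "dd (tb k (i div 8)) j j' (i mod 8) = 0" using QQ_diff(1)[OF assms(2-4)] by simp
    then have "dd zt j j' (i mod 8) = 0" using True tb_cases(1) by simp
    then show False using znz[OF assms(3-5) a8] by simp
  next
    case False
    have xpos: "0 < int (i div 8)" "int (i div 8) < TT k" using False div8_le[OF assms(2)] unfolding TT_def by linarith+
    have "(QQ k i j - QQ k i j') mod TT k = 0" using dT by (simp only: dvd_eq_mod_eq_0)
    then have z: "(nu (tb k (i div 8)) j j' (i mod 8) * int (i div 8)) mod TT k = 0"
      using QQ_diff(2)[OF assms(2-4)] by simp
    have "coprime (nu (tb k (i div 8)) j j' (i mod 8)) (TT k)"
    proof (cases "i div 8 \<le> k")
      case True
      have "0 < i div 8" using False by simp
      then have "tb k (i div 8) = pt" using True by (rule tb_cases(2))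
      then show ?thesis using nu_cop(1)[OF assms(1,3,4,5) a8] by (simp only:)
    next
      case F2: False
      then have "k < i div 8" by simp
      then have "tb k (i div 8) = nt" by (rule tb_cases(3))
      then show ?thesis using nu_cop(2)[OF assms(1,3,4,5) a8] by (simp only:)
    qed
    from cop_nz[OF this xpos] z show False by (simp only:)
  qed
qed


lemma witness: assumes "j < 3" "j' < 3" "0 \<le> d" "d < 8*TT k" "a < 8" "x \<le> 2*k" "tb k x = tab"
  "dd tab j j' a = d mod 8" "(nu tab j j' a * int x) mod TT k = d mod TT k"
  shows "\<exists>i<16*k+8. (QQ k i j - QQ k i j') mod (8*TT k) = d"
proof -
  note r = row[OF assms(5,6)]
  have h6: "dd (tb k ((a+8*x) div 8)) j j' ((a+8*x) mod 8) = d mod 8"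
    unfolding r(2) r(3) assms(7) by (rule assms(8))
  have h7: "(nu (tb k ((a+8*x) div 8)) j j' ((a+8*x) mod 8) * int ((a+8*x) div 8)) mod TT k = d mod TT k"
    unfolding r(2) r(3) assms(7) by (rule assms(9))
  have "(QQ k (a+8*x) j - QQ k (a+8*x) j') mod (8*TT k) = d"
    by (rule target[OF r(1) assms(1,2,3,4) h6 h7])
  then show ?thesis using r(1) by blast
qed

lemma flip: "(- c * (T - x0)) mod T = (c * x0) mod (T::int)"
proof -
  have "- c * (T - x0) = c*x0 + T * (- c)" by (simp add: algebra_simps)
  then show ?thesis by (simp only: mod_mult_self2)
qed

lemma QQ_ds: assumes "k mod 3 \<noteq> 1" "j < 3" "j' < 3" "j \<noteq> j'" "0 < d" "d < 8*TT k"
  shows "\<exists>i<16*k+8. (QQ k i j - QQ k i j') mod (8*TT k) = d"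
proof -
  have d0: "0 \<le> d" using assms(5) by simp
  define e where "e = nat (d mod 8)"
  have e8: "e < 8" and ed: "int e = d mod 8" unfolding e_def by auto
  note W = witness[OF assms(2,3) d0 assms(6)]
  show ?thesis
  proof (cases "d mod TT k = 0")
    case True
    have "e \<noteq> 0"
    proof
      assume "e = 0"
      then have "d mod 8 = 0 mod 8" using ed by simp
      then have "d = 0" using eq_by_mods[OF d0 assms(6), of 0] True TT_pos[of k] by simp
      then show False using assms(5) by simp
    qed
    obtain a where a: "a < 8" "dd zt j j' a = int e" using zsurj[OF assms(2-4) e8 \<open>e \<noteq> 0\<close>] by blast
    show ?thesis
      by (rule W[OF a(1), of 0 zt]) (simp_all add: tb_cases(1) a(2) ed True)
  next
    case False
    obtain a b where ab: "a < 8" "b < 8" "mt j j' e a b" using match[OF assms(2-4) e8] by blast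
    have sol: "\<exists>x. 0 < x \<and> x \<le> 2*k \<and> (c * int x) mod TT k = d mod TT k" if cc: "coprime c (TT k)" for c
    proof -
      obtain x0 where x0: "0 \<le> x0" "x0 < TT k" "(c*x0) mod TT k = d mod TT k" using solve[OF cc] by blast
      have "x0 \<noteq> 0" using x0(3) False by auto
      then have "0 < nat x0" "nat x0 \<le> 2*k" "int (nat x0) = x0" using x0 unfolding TT_def by auto
      then show ?thesis using x0(3) by metis
    qed
    have tbp: "tb k x = pt" if "0 < x" "x \<le> k" for x by (rule tb_cases(2)[OF that])
    have tbn: "tb k x = nt" if "k < x" for x by (rule tb_cases(3)[OF that])
    have fl: "0 < 2*k+1-x" "int (2*k+1-x) = TT k - int x" "2*k+1-x \<le> 2*k" if "0 < x" "x \<le> 2*k" for x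
      using that unfolding TT_def by auto
    from ab(3) show ?thesis unfolding mt_def
    proof (elim disjE conjE)
      assume h: "dd pt j j' a = int e" "dd nt j j' b = int e" "nu pt j j' a = nu nt j j' b"
      obtain x where x: "0 < x" "x \<le> 2*k" "(nu pt j j' a * int x) mod TT k = d mod TT k"
        using sol[OF nu_cop(1)[OF assms(1-4) ab(1)]] by blast
      show ?thesis
      proof (cases "x \<le> k")
        case True
        show ?thesis by (rule W[OF ab(1) x(2) tbp[OF x(1) True]]) (simp_all add: h(1) ed x(3))
      next
        case False
        have hx: "(nu nt j j' b * int x) mod TT k = d mod TT k" unfolding h(3)[symmetric] by (rule x(3))
        have kx: "k < x" using False by simp
        show ?thesis by (rule W[OF ab(2) x(2) tbn[OF kx] _ hx]) (use h(2) ed in simp)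
      qed
    next
      assume h: "dd pt j j' a = int e" "dd pt j j' b = int e" "nu pt j j' b = - nu pt j j' a"
      obtain x where x: "0 < x" "x \<le> 2*k" "(nu pt j j' a * int x) mod TT k = d mod TT k"
        using sol[OF nu_cop(1)[OF assms(1-4) ab(1)]] by blast
      show ?thesis
      proof (cases "x \<le> k")
        case True
        show ?thesis by (rule W[OF ab(1) x(2) tbp[OF x(1) True]]) (simp_all add: h(1) ed x(3))
      next
        case False
        have "2*k+1-x \<le> k" using False by simp
        have hx: "(nu pt j j' b * int (2*k+1-x)) mod TT k = d mod TT k"
          unfolding h(3) fl(2)[OF x(1,2)] flip using x(3) .
        show ?thesis
          by (rule W[OF ab(2) fl(3)[OF x(1,2)] tbp[OF fl(1)[OF x(1,2)] \<open>2*k+1-x \<le> k\<close>] _ hx]) (simp add: h(2) ed)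
      qed
    next
      assume h: "dd nt j j' a = int e" "dd nt j j' b = int e" "nu nt j j' b = - nu nt j j' a"
      obtain x where x: "0 < x" "x \<le> 2*k" "(nu nt j j' a * int x) mod TT k = d mod TT k"
        using sol[OF nu_cop(2)[OF assms(1-4) ab(1)]] by blast
      show ?thesis
      proof (cases "k < x")
        case True
        show ?thesis by (rule W[OF ab(1) x(2) tbn[OF True]]) (simp_all add: h(1) ed x(3))
      next
        case False
        have "k < 2*k+1-x" using False by simp
        have hx: "(nu nt j j' b * int (2*k+1-x)) mod TT k = d mod TT k"
          unfolding h(3) fl(2)[OF x(1,2)] flip using x(3) .
        show ?thesis
          by (rule W[OF ab(2) fl(3)[OF x(1,2)] tbn[OF \<open>k < 2*k+1-x\<close>] _ hx]) (simp add: h(2) ed)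
      qed
    qed
  qed
qed



lemma QQ_zero_row: "QQ k (16*k+8) j = 0" unfolding QQ_def by simp
lemma QQ_zero_col: "QQ k i 3 = 0" unfolding QQ_def by simp

lemma QQ_range: "0 \<le> QQ k i j \<and> QQ k i j < 8 * TT k"
proof (cases "i < 16*k+8 \<and> j < 3")
  case True then show ?thesis using QQ_facts(3,4)[of i k j] by simp
next
  case False
  then have "QQ k i j = 0" unfolding QQ_def by (simp only: if_False)
  then show ?thesis using TT_pos[of k] by simp
qed

lemma cover: assumes "k mod 3 \<noteq> 1" "j < 4" "j' < 4" "j \<noteq> j'" "0 \<le> d" "d < 8*TT k"
  shows "\<exists>i<16*k+8+1. (QQ k i j - QQ k i j') mod (8*TT k) = d"
proof (cases "j < 3 \<and> j' < 3")
  case True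
  then have jj: "j < 3" "j' < 3" by simp_all
  show ?thesis
  proof (cases "d = 0")
    case True
    have "(QQ k (16*k+8) j - QQ k (16*k+8) j') mod (8*TT k) = d"
      unfolding QQ_zero_row True by simp
    moreover have "16*k+8 < 16*k+8+1" by simp
    ultimately show ?thesis by blast
  next
    case False
    then have "0 < d" using assms(5) by simp
    obtain i where i: "i < 16*k+8" "(QQ k i j - QQ k i j') mod (8*TT k) = d"
      using QQ_ds[OF assms(1) jj assms(4) \<open>0 < d\<close> assms(6)] by blast
    have "i < 16*k+8+1" using i(1) by simp
    then show ?thesis using i(2) by blast
  qed
next
  case False
  show ?thesis
  proof (cases "j' = 3")
    case True
    then have "j < 3" using assms(2,4) by simp
    obtain i where i: "i < 16*k+8" "QQ k i j = d" using col_surj[OF assms(1) \<open>j<3\<close> assms(5,6)] by blast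
    have "(QQ k i j - QQ k i j') mod (8*TT k) = d"
      unfolding True QQ_zero_col i(2) using assms(5,6) by simp
    moreover have "i < 16*k+8+1" using i(1) by simp
    ultimately show ?thesis by blast
  next
    case F2: False
    then have "j = 3" "j' < 3" using False assms(2,3) by auto
    have z: "0 \<le> (- d) mod (8*TT k)" "(- d) mod (8*TT k) < 8*TT k" using TT_pos[of k] by simp_all
    obtain i where i: "i < 16*k+8" "QQ k i j' = (- d) mod (8*TT k)" using col_surj[OF assms(1) \<open>j'<3\<close> z] by blast
    have "(QQ k i j - QQ k i j') mod (8*TT k) = (- ((- d) mod (8*TT k))) mod (8*TT k)"
      unfolding i(2) \<open>j = 3\<close> QQ_zero_col by simp
    also have "\<dots> = (- (- d)) mod (8*TT k)" by (rule mod_minus_eq)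
    also have "\<dots> = d" using assms(5,6) by simp
    finally have "(QQ k i j - QQ k i j') mod (8*TT k) = d" .
    moreover have "i < 16*k+8+1" using i(1) by simp
    ultimately show ?thesis by blast
  qed
qed

lemma p1: assumes "k mod 3 \<noteq> 1" "j < 4" shows "2 \<le> card {i. i < 16*k+8+1 \<and> QQ k i j = 0}"
proof -
  obtain i0 where i0: "i0 < 16*k+8" "QQ k i0 j = 0"
  proof (cases "j < 3")
    case True then show ?thesis using col_surj[OF assms(1) True, of 0] TT_pos[of k] that by auto
  next
    case False then have "j = 3" using assms(2) by simp
    then show ?thesis using QQ_zero_col[of k 0] that[of 0] by simp
  qed
  have sub: "{i0, 16*k+8} \<subseteq> {i. i < 16*k+8+1 \<and> QQ k i j = 0}" using i0 QQ_zero_row[of k j] by auto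
  have fin: "finite {i. i < 16*k+8+1 \<and> QQ k i j = 0}" by simp
  have "card {i0, 16*k+8} = 2" using i0(1) by simp
  then show ?thesis using card_mono[OF fin sub] by simp
qed

lemma p2: assumes "k mod 3 \<noteq> 1" "j < 3" "j' < 3" "j \<noteq> j'"
  shows "{(QQ k i j - QQ k i j') mod (8*TT k) | i. i < 16*k+8} = {1..<8*TT k}"
proof
  show "{(QQ k i j - QQ k i j') mod (8*TT k) | i. i < 16*k+8} \<subseteq> {1..<8*TT k}"
  proof
    fix v assume "v \<in> {(QQ k i j - QQ k i j') mod (8*TT k) | i. i < 16*k+8}"
    then obtain i where i: "i < 16*k+8" "v = (QQ k i j - QQ k i j') mod (8*TT k)" by blast
    have "v \<noteq> 0" using QQ_nz[OF assms(1) i(1) assms(2-4)] i(2) by simp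
    moreover have "0 \<le> v" "v < 8*TT k" using i(2) TT_pos[of k] by simp_all
    ultimately show "v \<in> {1..<8*TT k}" by simp
  qed
next
  show "{1..<8*TT k} \<subseteq> {(QQ k i j - QQ k i j') mod (8*TT k) | i. i < 16*k+8}"
  proof
    fix v assume "v \<in> {1..<8*TT k}"
    then have "0 < v" "v < 8*TT k" by simp_all
    then obtain i where "i < 16*k+8" "(QQ k i j - QQ k i j') mod (8*TT k) = v"
      using QQ_ds[OF assms] by blast
    then show "v \<in> {(QQ k i j - QQ k i j') mod (8*TT k) | i. i < 16*k+8}" by force
  qed
qed

theorem mainTheorem20:
  fixes k :: nat
  assumes "k mod 3 \<noteq> 1"
  shows "\<exists>Q. is_normalized_DCA 4 (16*k+8) Q \<and> DCA_P1 4 (16*k+9) Q \<and> DCA_P2 4 (16*k+8) Q"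
proof -
  have NN: "int (16*k+8) = 8 * TT k" using N_eq[of k] by simp
  have c1: "1 \<le> 8 * TT k" using TT_pos[of k] by simp
  have c2: "\<forall>i<16*k+8+1. \<forall>j<4. 0 \<le> QQ k i j \<and> QQ k i j < 8 * TT k" using QQ_range by blast
  have c3: "\<forall>j<4. \<forall>j'<4. j \<noteq> j' \<longrightarrow> (\<forall>d\<in>{0..<8 * TT k}. \<exists>i<16*k+8+1. (QQ k i j - QQ k i j') mod (8 * TT k) = d)"
  proof (intro allI impI ballI)
    fix j j' :: nat and d :: int
    assume "j < 4" "j' < 4" "j \<noteq> j'" "d \<in> {0..<8 * TT k}"
    then show "\<exists>i<16*k+8+1. (QQ k i j - QQ k i j') mod (8 * TT k) = d"
      by (intro cover[OF assms]) auto
  qed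
  have dca: "is_DCA 4 (16*k+8+1) (int (16*k+8)) (QQ k)"
    unfolding is_DCA_def entries_in_Zn_def NN using c1 c2 c3 by blast
  have norm: "is_normalized_DCA 4 (16*k+8) (QQ k)"
    unfolding is_normalized_DCA_def using dca QQ_zero_row[of k] QQ_zero_col[of k] by simp
  have P1: "DCA_P1 4 (16*k+9) (QQ k)"
  proof -
    have "\<forall>j<4. 2 \<le> card {i. i < 16*k+8+1 \<and> QQ k i j = 0}" using p1[OF assms] by blast
    moreover have "16*k+9 = 16*k+8+1" by simp
    ultimately show ?thesis unfolding DCA_P1_def by metis
  qed
  have P2: "DCA_P2 4 (16*k+8) (QQ k)"
    unfolding DCA_P2_def NN
  proof (intro allI impI)
    fix j j' :: nat
    assume "j < 4" "j' < 4" "j \<noteq> j' \<and> j \<noteq> 4 - 1 \<and> j' \<noteq> 4 - 1"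
    then have "j < 3" "j' < 3" "j \<noteq> j'" by auto
    then show "{(QQ k i j - QQ k i j') mod (8 * TT k) | i. i < 16*k+8} = {1..<8 * TT k}"
      by (rule p2[OF assms])
  qed
  show ?thesis using norm P1 P2 by blast
qed


end
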